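(* Let $F_1(v)=\frac{1-e^{-v}}{v}=\int_0^1 e^{-vu}\,du$ for real $v$ (so $F_1(0)=1$), and for $j\in\mathbb{N}$ let $G_j(v)=\frac{v^j}{1-e^{-v}}$ for real $v\neq0$, extended by $G_j(0)=1$ if $j=1$ and $G_j(0)=0$ if $j>1$; let $f_j(v)=G_j^{(j)}(v)$. Then: (1) $F_1^{(k)}(0)=\frac{(-1)^k}{k+1}$ for all $k\ge0$. (2) For $k\ge0$ and $j\in\mathbb{N}$, \[ G_j^{(k)}(0)=\begin{cases}0, & k<j-1;\\[2pt] (-1)^{k-j+1}k!\,(k-j+2)!\displaystyle\sum_{q=0}^{k-j+1}\frac{(-1)^{q}}{q+1}\,\frac{S(k-j+q+1,q)}{(k-j-q+1)!\,(k-j+q+1)!}, & k\ge j-1.\end{cases} \] In particular, for $j\in\mathbb{N}$, \[ G_j^{(j-1)}(0)=(j-1)!,\quad G_j^{(j)}(0)=f_j(0)=\frac{j!}{2},\quad G_j^{(j+1)}(0)=f_j'(0)=\frac{(j+1)!}{12},\quad G_j^{(j+2)}(0)=0. \] (3) For $j\in\mathbb{N}$, the Maclaurin power series of $f_j$ is \[ f_j(v)=\sum_{i=0}^{\infty}(-1)^{i+1}(i+1)(i+2)(j+i)!\Biggl[\sum_{q=0}^{i+1}\frac{(-1)^{q}}{q+1}\,\frac{S(i+q+1,q)}{(i-q+1)!\,(i+q+1)!}\Biggr]v^i. \]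
   Context: $\mathbb{N}=\{1,2,3,\dots\}$. $S(n,k)$ denotes the Stirling numbers of the second kind, defined by $\frac{(e^v-1)^k}{k!}=\sum_{n=k}^\infty S(n,k)\frac{v^n}{n!}$ (so $S(0,0)=1$ and $S(n,0)=0$ for $n\ge1$). The function $G_j$ as defined is real-analytic on $(-2\pi,2\pi)$, so its derivatives at $0$ make sense. *)

theory Defs
  imports "HOL-Analysis.Analysis" "HOL-Combinatorics.Stirling"
begin

definition F1 :: "real \<Rightarrow> real" where
  "F1 v = (if v = 0 then 1 else (1 - exp (- v)) / v)"

definition G :: "nat \<Rightarrow> real \<Rightarrow> real" where
  "G j v = (if v = 0 then (if j = 1 then 1 else 0) else v ^ j / (1 - exp (- v)))"

definition f :: "nat \<Rightarrow> real \<Rightarrow> real" where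
  "f j = (deriv ^^ j) (G j)"

end

theory Submission
  imports Defs "HOL-Complex_Analysis.Complex_Analysis"
begin

lemma stirling_fps:
  fixes c :: "'a::field_char_0"
  shows "((fps_exp c - 1) ^ r) $ n = c ^ n * fact r * of_nat (Stirling n r) / fact n"
proof (induction r arbitrary: n)
  case 0 then show ?case by (cases n) auto
next
  case (Suc r)
  note IHr = Suc.IH
  let ?A = "fps_exp c - 1"
  have dA: "fps_deriv ?A = fps_const c * (?A + 1)" by simp
  have d: "fps_deriv (?A ^ Suc r) = fps_const (of_nat (Suc r) * c) * (?A ^ Suc r + ?A ^ r)"
    unfolding fps_deriv_power dA by (simp add: algebra_simps fps_const_mult[symmetric] del: fps_const_mult)
  show ?case
  proof (induction n)
    case 0 show ?case by (simp add: fps_nth_power_0)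
  next
    case (Suc n)
    have "of_nat (Suc n) * (?A ^ Suc r) $ Suc n = (fps_deriv (?A ^ Suc r)) $ n" by (simp only: fps_deriv_nth Suc_eq_plus1)
    also have "\<dots> = of_nat (Suc r) * c * ((?A ^ Suc r) $ n + (?A ^ r) $ n)" by (simp only: d fps_mult_left_const_nth fps_add_nth)
    also have "\<dots> = of_nat (Suc r) * c * (c ^ n * fact (Suc r) * of_nat (Stirling n (Suc r)) / fact n
         + c ^ n * fact r * of_nat (Stirling n r) / fact n)" by (simp only: Suc.IH IHr)
    also have "\<dots> = of_nat (Suc n) * (c ^ Suc n * fact (Suc r) * of_nat (Stirling (Suc n) (Suc r)) / fact (Suc n))"
      by (simp add: fact_Suc divide_simps del: of_nat_Suc) (simp add: algebra_simps)
    finally have *: "of_nat (Suc n) * (?A ^ Suc r) $ Suc n = of_nat (Suc n) * (c ^ Suc n * fact (Suc r) * of_nat (Stirling (Suc n) (Suc r)) / fact (Suc n))" .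
    have "(of_nat (Suc n)::'a) \<noteq> 0" by (rule of_nat_neq_0)
    with * show ?case by (metis mult_cancel_left)
  qed
qed

definition HH :: "'a::field_char_0 fps" where
  "HH = fps_shift 1 (1 - fps_exp (-1))"

lemma HH_nth: "(HH :: 'a::field_char_0 fps) $ n = (-1) ^ n / fact (Suc n)"
  by (simp add: HH_def algebra_simps)

lemma HH_X: "fps_X * (HH :: 'a::field_char_0 fps) = 1 - fps_exp (-1)"
  apply (rule fps_ext)
  subgoal for n by (cases n) (simp_all add: HH_nth algebra_simps)
  done

lemma HH_pow: "((HH :: 'a::field_char_0 fps) ^ r) $ n = (-1) ^ n * fact r * of_nat (Stirling (n + r) r) / fact (n + r)"
proof -
  have e: "(1 - fps_exp (-1) :: 'a fps) = fps_const (-1) * (fps_exp (-1) - 1)" by (rule fps_ext) simp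
  have "((HH :: 'a fps) ^ r) $ n = (fps_X ^ r * HH ^ r) $ (n + r)"
    by (simp add: fps_X_power_mult_nth)
  also have "fps_X ^ r * HH ^ r = (1 - fps_exp (-1) :: 'a fps) ^ r"
    by (simp add: HH_X power_mult_distrib[symmetric])
  also have "\<dots> = fps_const ((-1) ^ r) * (fps_exp (-1) - 1) ^ r"
    by (simp only: e power_mult_distrib fps_const_power)
  also have "(\<dots>) $ (n + r) = (-1) ^ r * ((-1) ^ (n + r) * fact r * of_nat (Stirling (n + r) r) / fact (n + r))"
    by (simp only: fps_mult_left_const_nth stirling_fps)
  also have "\<dots> = (-1) ^ n * fact r * of_nat (Stirling (n + r) r) / fact (n + r)"
    by (simp add: power_add)
  finally show ?thesis .
qed

lemma HH_0: "(HH :: 'a::field_char_0 fps) $ 0 = 1"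
  by (simp add: HH_nth)

lemma inverse_HH_trunc:
  "(inverse (HH :: 'a::field_char_0 fps)) $ m = (\<Sum>q<Suc m. ((1 - HH) ^ q) $ m)"
proof -
  define U where "U = (1 - HH :: 'a fps)"
  define V where "V = fps_shift 1 U"
  have U0: "U $ 0 = 0" by (simp add: U_def HH_0)
  have UV: "U = V * fps_X"
    by (rule fps_ext) (auto simp: V_def U0 fps_X_mult_right_nth split: nat.splits)
  have geo: "1 - U ^ Suc m = HH * (\<Sum>q<Suc m. U ^ q)"
    using one_diff_power_eq[of U "Suc m"] by (simp only: U_def diff_diff_eq2 diff_add_cancel add_diff_cancel_left')
  have inv: "inverse HH * HH = (1 :: 'a fps)"
    by (rule inverse_mult_eq_1) (simp add: HH_0)
  have "inverse HH = inverse HH * (HH * (\<Sum>q<Suc m. U ^ q) + U ^ Suc m)"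
    using geo by (metis diff_add_cancel mult_1_right)
  also have "\<dots> = (\<Sum>q<Suc m. U ^ q) + (inverse HH * V ^ Suc m) * fps_X ^ Suc m"
    by (simp only: distrib_left mult.assoc[symmetric] inv mult_1_left UV power_mult_distrib)
  finally have "inverse HH $ m = ((\<Sum>q<Suc m. U ^ q) + (inverse HH * V ^ Suc m) * fps_X ^ Suc m) $ m"
    by simp
  also have "\<dots> = (\<Sum>q<Suc m. (U ^ q) $ m)"
    by (simp only: fps_add_nth fps_X_power_mult_right_nth fps_sum_nth) simp
  finally show ?thesis by (simp add: U_def)
qed

lemma neg_pow_nth: "((- F :: 'a::comm_ring_1 fps) ^ r) $ m = (-1) ^ r * (F ^ r) $ m"
  by (subst power_minus) (cases "even r", simp_all)

lemma one_minus_HH_pow: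
  "((1 - (HH :: 'a::field_char_0 fps)) ^ q) $ m = (\<Sum>r\<le>q. of_nat (q choose r) * (-1) ^ r * (HH ^ r) $ m)"
proof -
  have "(1 - (HH :: 'a fps)) ^ q = (- HH + 1) ^ q" by simp
  also have "\<dots> = (\<Sum>r\<le>q. of_nat (q choose r) * (- HH) ^ r * 1 ^ (q - r))"
    by (rule binomial_ring)
  finally have "((1 - (HH :: 'a fps)) ^ q) $ m = (\<Sum>r\<le>q. (of_nat (q choose r) * (- HH) ^ r * 1 ^ (q - r)) $ m)"
    by (simp only: fps_sum_nth)
  also have "\<dots> = (\<Sum>r\<le>q. of_nat (q choose r) * (-1) ^ r * (HH ^ r) $ m)"
    by (intro sum.cong refl) (simp only: power_one mult_1_right fps_of_nat[symmetric] fps_mult_left_const_nth neg_pow_nth mult.assoc)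
  finally show ?thesis .
qed

lemma inverse_HH_nth:
  "(inverse (HH :: 'a::field_char_0 fps)) $ m =
     (\<Sum>r\<le>m. (-1) ^ (r + m) * fact r * of_nat (Stirling (m + r) r) / fact (m + r) * of_nat (Suc m choose Suc r))"
proof -
  define a where "a r = ((HH :: 'a fps) ^ r) $ m" for r
  have "(inverse (HH :: 'a fps)) $ m = (\<Sum>q\<le>m. \<Sum>r\<le>q. of_nat (q choose r) * (-1) ^ r * a r)"
    by (simp add: inverse_HH_trunc one_minus_HH_pow a_def lessThan_Suc_atMost)
  also have "\<dots> = (\<Sum>q\<le>m. \<Sum>r\<le>m. of_nat (q choose r) * (-1) ^ r * a r)"
    by (intro sum.cong refl sum.mono_neutral_left) (auto simp: binomial_eq_0)
  also have "\<dots> = (\<Sum>r\<le>m. (-1) ^ r * a r * (\<Sum>q\<le>m. of_nat (q choose r)))"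
    by (subst sum.swap) (simp add: sum_distrib_left mult_ac)
  also have "\<dots> = (\<Sum>r\<le>m. (-1) ^ r * a r * of_nat (Suc m choose Suc r))"
    by (simp only: of_nat_sum[symmetric] sum_choose_upper)
  also have "\<dots> = (\<Sum>r\<le>m. (-1) ^ (r + m) * fact r * of_nat (Stirling (m + r) r) / fact (m + r) * of_nat (Suc m choose Suc r))"
    by (intro sum.cong refl) (simp add: a_def HH_pow power_add algebra_simps del: binomial_Suc_Suc)
  finally show ?thesis .
qed

definition BB :: "nat \<Rightarrow> real" where
  "BB m = (-1) ^ m * fact (m + 1) * (\<Sum>q = 0..m. (-1) ^ q / real (q + 1) *
                     real (Stirling (m + q) q) / (fact (m - q) * fact (m + q)))"

lemma BB_alt:
  "BB m = (\<Sum>r\<le>m. (-1) ^ (r + m) * fact r * real (Stirling (m + r) r) / fact (m + r) * real (Suc m choose Suc r))"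
  unfolding BB_def sum_distrib_left atLeast0AtMost
proof (intro sum.cong refl)
  fix q assume "q \<in> {..m}"
  hence qm: "q \<le> m" by simp
  have "fact (Suc q) * fact (Suc m - Suc q) * (Suc m choose Suc q) = (fact (Suc m) :: nat)"
    by (rule binomial_fact_lemma) (use qm in simp)
  hence "real (fact (Suc q) * fact (Suc m - Suc q) * (Suc m choose Suc q)) = fact (Suc m)"
    by (simp only: of_nat_fact)
  hence "fact (Suc q) * fact (m - q) * real (Suc m choose Suc q) = fact (Suc m)"
    by (simp only: of_nat_mult of_nat_fact diff_Suc_Suc)
  moreover have fq: "(fact (Suc q)::real) = real (q + 1) * fact q" by simp
  ultimately have e: "fact (m + 1) = real (q + 1) * fact q * fact (m - q) * real (Suc m choose Suc q)"
    by (metis Suc_eq_plus1)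
  show "(-1) ^ m * fact (m + 1) * ((-1) ^ q / real (q + 1) * real (Stirling (m + q) q) / (fact (m - q) * fact (m + q))) =
        (-1) ^ (q + m) * fact q * real (Stirling (m + q) q) / fact (m + q) * real (Suc m choose Suc q)"
    unfolding e by (simp add: power_add field_simps del: binomial_Suc_Suc of_nat_Suc)
qed

lemma inverse_HH_complex: "(inverse (HH :: complex fps)) $ m = complex_of_real (BB m)"
  by (simp add: inverse_HH_nth BB_alt del: binomial_Suc_Suc)

lemma BB_0: "BB 0 = 1" by (simp add: BB_def)
lemma BB_1: "BB 1 = 1/2" by (simp add: BB_def numeral_eq_Suc atLeast0AtMost)
lemma BB_2: "BB 2 = 1/12" by (simp add: BB_def numeral_eq_Suc atLeast0AtMost)
lemma BB_3: "BB 3 = 0" by (simp add: BB_def numeral_eq_Suc atLeast0AtMost)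

lemma real_deriv_transfer:
  fixes H :: "complex \<Rightarrow> complex" and h :: "real \<Rightarrow> real"
  assumes holo: "H holomorphic_on ball 0 r"
    and eq: "\<And>x. \<bar>x\<bar> < r \<Longrightarrow> H (of_real x) = of_real (h x)"
  shows "\<bar>x\<bar> < r \<Longrightarrow> (deriv ^^ k) H (of_real x) = of_real ((deriv ^^ k) h x)"
proof (induction k arbitrary: x)
  case 0 thus ?case using eq by simp
next
  case (Suc k)
  let ?D = "(deriv ^^ k) H"
  let ?d = "(deriv ^^ k) h"
  let ?D' = "deriv ?D (of_real x)"
  have hol: "?D holomorphic_on ball 0 r"
    by (rule holomorphic_higher_deriv[OF holo]) auto
  have xin: "complex_of_real x \<in> ball 0 r" using Suc.prems by simp
  have "(?D has_field_derivative ?D') (at (of_real x))"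
    by (rule holomorphic_derivI[OF hol open_ball xin])
  hence v1: "((\<lambda>t. ?D (of_real t)) has_vector_derivative ?D') (at x)"
    by (rule has_vector_derivative_real_field)
  have v2: "((\<lambda>t. complex_of_real (?d t)) has_vector_derivative ?D') (at x)"
    by (rule has_vector_derivative_transform_within_open[OF v1, of "{-r<..<r}"])
       (use Suc.prems Suc.IH in \<open>auto simp: abs_less_iff\<close>)
  have "((\<lambda>t. Re (complex_of_real (?d t))) has_vector_derivative Re ?D') (at x)"
    by (rule bounded_linear.has_vector_derivative[OF bounded_linear_Re v2])
  hence v3: "(?d has_real_derivative Re ?D') (at x)"
    by (simp add: has_real_derivative_iff_has_vector_derivative)
  hence "((\<lambda>t. complex_of_real (?d t)) has_vector_derivative of_real (Re ?D')) (at x)"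
    by (rule has_vector_derivative_of_real)
  hence e1: "?D' = of_real (Re ?D')"
    by (rule vector_derivative_unique_at[OF v2])
  have e2: "deriv ?d x = Re ?D'" by (rule DERIV_imp_deriv[OF v3])
  show ?case using e1 e2 by simp
qed

definition hc :: "complex \<Rightarrow> complex" where
  "hc z = (if z = 0 then 1 else (1 - exp (- z)) / z)"

lemma hc_fps: "hc has_fps_expansion HH"
proof -
  have A: "(\<lambda>z::complex. 1 - exp (- z)) has_fps_expansion (1 - fps_exp (-1))"
    by (intro fps_expansion_intros)
  have sd: "1 \<le> subdegree (1 - fps_exp (-1) :: complex fps)"
  proof (rule subdegree_geI)
    show "(1 - fps_exp (-1) :: complex fps) \<noteq> 0"
    proof
      assume "(1 - fps_exp (-1) :: complex fps) = 0"
      hence "(1 - fps_exp (-1) :: complex fps) $ 1 = 0" by simp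
      thus False by simp
    qed
  qed simp
  have "(\<lambda>x. if x = 0 then (1 - fps_exp (-1::complex)) $ 1 else (1 - exp (- x)) / x ^ 1)
          has_fps_expansion fps_shift 1 (1 - fps_exp (-1))"
    by (rule has_fps_expansion_shift[OF A sd refl])
  moreover have "(\<lambda>x. if x = 0 then (1 - fps_exp (-1::complex)) $ 1 else (1 - exp (- x)) / x ^ 1) = hc"
    by (auto simp: hc_def fun_eq_iff)
  ultimately show ?thesis by (simp add: HH_def)
qed

lemma hc_holo: "hc holomorphic_on UNIV"
proof -
  have "(\<lambda>z::complex. 1 - exp (- z)) holomorphic_on UNIV" by (intro holomorphic_intros)
  hence "(\<lambda>z. if z = 0 then deriv (\<lambda>z::complex. 1 - exp (- z)) 0
              else ((1 - exp (- z)) - (1 - exp (- 0))) / (z - 0)) holomorphic_on UNIV"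
    by (rule pole_lemma) simp
  moreover have "deriv (\<lambda>z::complex. 1 - exp (- z)) 0 = 1"
    by (rule DERIV_imp_deriv) (auto intro!: derivative_eq_intros)
  moreover have "(\<lambda>z. if z = 0 then deriv (\<lambda>z::complex. 1 - exp (- z)) 0
              else ((1 - exp (- z)) - (1 - exp (- 0))) / (z - 0)) = hc"
    using calculation(2) by (auto simp: hc_def fun_eq_iff)
  ultimately show ?thesis by simp
qed

lemma hc_nz: assumes "norm z < 2 * pi" shows "hc z \<noteq> 0"
proof
  assume h: "hc z = 0"
  hence z0: "z \<noteq> 0" by (auto simp: hc_def split: if_splits)
  with h have "exp (- z) = 1" by (simp add: hc_def)
  then obtain n :: int where re: "Re z = 0" and im: "Im (- z) = of_int (2 * n) * pi"
    by (auto simp: exp_eq_1)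
  have "\<bar>Im z\<bar> < 2 * pi" using abs_Im_le_cmod[of z] assms by linarith
  moreover have "Im z = - (real_of_int n * (2 * pi))" using im by simp
  ultimately have "\<bar>real_of_int n\<bar> * (2 * pi) < 1 * (2 * pi)" by (simp add: abs_mult)
  hence "\<bar>of_int n :: real\<bar> < 1" by (rule mult_right_less_imp_less) (use pi_gt_zero in simp)
  hence "n = 0" by linarith
  with im re have "z = 0" by (simp add: complex_eq_iff)
  with z0 show False by simp
qed

lemma hc_real: "hc (complex_of_real x) = complex_of_real (F1 x)"
  by (simp add: hc_def F1_def exp_of_real[symmetric] del: exp_of_real)

definition Gc :: "nat \<Rightarrow> complex \<Rightarrow> complex" where
  "Gc j z = z ^ (j - 1) * inverse (hc z)"

lemma Gc_fps: "Gc j has_fps_expansion fps_X ^ (j - 1) * inverse HH"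
  unfolding Gc_def[abs_def]
  by (intro has_fps_expansion_mult has_fps_expansion_fps_X_power has_fps_expansion_inverse hc_fps)
     (simp add: HH_0)

lemma Gc_holo: "Gc j holomorphic_on ball 0 (2 * pi)"
  unfolding Gc_def[abs_def]
  by (intro holomorphic_intros holomorphic_on_subset[OF hc_holo]) (auto simp: hc_nz)

lemma Gc_real: assumes "j \<ge> 1" shows "Gc j (complex_of_real x) = complex_of_real (G j x)"
proof (cases "x = 0")
  case True thus ?thesis using assms by (simp add: Gc_def hc_def G_def)
next
  case False
  have "1 - exp (- x) \<noteq> 0" using False by simp
  moreover have "x ^ j = x ^ (j - 1) * x" using assms by (metis Suc_diff_1 less_le_trans power_Suc2 zero_less_one)
  ultimately show ?thesis using False
    by (simp add: Gc_def hc_def G_def exp_of_real[symmetric] del: exp_of_real)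
qed

lemma G_deriv0:
  assumes "j \<ge> 1"
  shows "(deriv ^^ k) (G j) 0 = (if k < j - 1 then 0 else fact k * BB (k + 1 - j))"
proof -
  have "complex_of_real ((deriv ^^ k) (G j) 0) = (deriv ^^ k) (Gc j) (of_real 0)"
    using real_deriv_transfer[OF Gc_holo[of j], where h="G j" and x=0 and k=k] Gc_real[OF assms] pi_gt_zero by simp
  also have "\<dots> = fact k * (fps_X ^ (j - 1) * inverse HH) $ k"
    using fps_nth_fps_expansion[OF Gc_fps, of j k] by simp
  also have "\<dots> = complex_of_real (if k < j - 1 then 0 else fact k * BB (k + 1 - j))"
    using assms by (simp add: fps_X_power_mult_nth inverse_HH_complex)
  finally show ?thesis by (simp only: of_real_eq_iff)
qed

lemma F1_deriv0: "(deriv ^^ k) F1 0 = (-1) ^ k / real (k + 1)"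
proof -
  have "complex_of_real ((deriv ^^ k) F1 0) = (deriv ^^ k) hc (of_real 0)"
    using real_deriv_transfer[OF holomorphic_on_subset[OF hc_holo], of 1 F1 0 k] hc_real by simp
  also have "\<dots> = fact k * HH $ k"
    using fps_nth_fps_expansion[OF hc_fps, of k] by simp
  also have "\<dots> = complex_of_real ((-1) ^ k / real (k + 1))"
    by (simp add: HH_nth fact_Suc del: of_nat_Suc)
  finally show ?thesis by (simp only: of_real_eq_iff)
qed

lemma coeff_eq:
  assumes "j \<ge> 1"
  shows "(deriv ^^ (i + j)) (G j) 0 / fact i =
    (-1) ^ (i + 1) * real (i + 1) * real (i + 2) * fact (j + i) *
                    (\<Sum>q = 0..i + 1. (-1) ^ q / real (q + 1) *
                       real (Stirling (i + q + 1) q) / (fact (i + 1 - q) * fact (i + q + 1)))"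
proof -
  have "(deriv ^^ (i + j)) (G j) 0 / fact i = fact (i + j) * BB (i + 1) / fact i"
    using assms by (simp add: G_deriv0)
  also have "\<dots> = (-1) ^ (i + 1) * (fact (i + 2) / fact i) * fact (j + i) *
                    (\<Sum>q = 0..i + 1. (-1) ^ q / real (q + 1) *
                       real (Stirling (i + q + 1) q) / (fact (i + 1 - q) * fact (i + q + 1)))"
    by (simp add: BB_def add_ac)
  also have "fact (i + 2) / fact i = (real (i + 1) * real (i + 2) :: real)"
    by (simp add: numeral_eq_Suc field_simps)
  finally show ?thesis by (simp add: mult_ac)
qed

lemma f_series:
  assumes "j \<ge> 1" and v: "\<bar>v\<bar> < 2 * pi"
  shows "(\<lambda>i. (deriv ^^ (i + j)) (G j) 0 / fact i * v ^ i) sums f j v"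
proof -
  define Fc where "Fc = (deriv ^^ j) (Gc j)"
  have hol: "Fc holomorphic_on ball 0 (2 * pi)"
    unfolding Fc_def by (rule holomorphic_higher_deriv[OF Gc_holo]) auto
  have "(\<lambda>n. (deriv ^^ n) Fc 0 / fact n * (complex_of_real v - 0) ^ n) sums Fc (of_real v)"
    by (rule holomorphic_power_series[OF hol]) (use v in simp)
  moreover have "(deriv ^^ n) Fc 0 = complex_of_real ((deriv ^^ (n + j)) (G j) 0)" for n
    using real_deriv_transfer[OF Gc_holo[of j], where h="G j" and x=0 and k="n + j"] Gc_real[OF assms(1)] pi_gt_zero
    by (simp add: Fc_def funpow_add)
  moreover have "Fc (of_real v) = complex_of_real (f j v)"
    using real_deriv_transfer[OF Gc_holo[of j], where h="G j" and x=v and k=j] Gc_real[OF assms(1)] v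
    by (simp add: Fc_def f_def)
  ultimately have "(\<lambda>n. complex_of_real ((deriv ^^ (n + j)) (G j) 0 / fact n * v ^ n)) sums complex_of_real (f j v)"
    by simp
  thus ?thesis by (simp only: sums_of_real_iff)
qed

theorem theorem3p1:
  shows "(\<forall>k::nat. (deriv ^^ k) F1 0 = (-1) ^ k / real (k + 1))
    \<and> (\<forall>j k::nat. j \<ge> 1 \<longrightarrow>
         (deriv ^^ k) (G j) 0 =
           (if k < j - 1 then 0
            else (let m = k + 1 - j in
                  (-1) ^ m * fact k * fact (m + 1) *
                  (\<Sum>q = 0..m. (-1) ^ q / real (q + 1) *
                     real (Stirling (m + q) q) / (fact (m - q) * fact (m + q))))))
    \<and> (\<forall>j::nat. j \<ge> 1 \<longrightarrow>
         (deriv ^^ (j - 1)) (G j) 0 = fact (j - 1)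
       \<and> (deriv ^^ j) (G j) 0 = fact j / 2
       \<and> f j 0 = fact j / 2
       \<and> (deriv ^^ (j + 1)) (G j) 0 = fact (j + 1) / 12
       \<and> deriv (f j) 0 = fact (j + 1) / 12
       \<and> (deriv ^^ (j + 2)) (G j) 0 = 0)
    \<and> (\<forall>j::nat. j \<ge> 1 \<longrightarrow>
         (let c = (\<lambda>i::nat. (-1) ^ (i + 1) * real (i + 1) * real (i + 2) * fact (j + i) *
                    (\<Sum>q = 0..i + 1. (-1) ^ q / real (q + 1) *
                       real (Stirling (i + q + 1) q) / (fact (i + 1 - q) * fact (i + q + 1))))
          in (\<forall>i. (deriv ^^ i) (f j) 0 / fact i = c i)
             \<and> (\<forall>v::real. \<bar>v\<bar> < 2 * pi \<longrightarrow> (\<lambda>i. c i * v ^ i) sums f j v)))"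
  apply (intro conjI allI impI)
  subgoal for k by (rule F1_deriv0)
  subgoal for j k by (simp add: G_deriv0 BB_def Let_def mult_ac)
  subgoal for j by (simp add: G_deriv0 BB_0)
  subgoal for j using G_deriv0[of j j] BB_1 by simp
  subgoal for j using G_deriv0[of j j] BB_1 unfolding f_def by simp
  subgoal for j using G_deriv0[of j "j + 1"] BB_2 by simp
  subgoal for j using G_deriv0[of j "Suc j"] by (simp add: f_def BB_2)
  subgoal for j using G_deriv0[of j "j + 2"] BB_3 by simp
  subgoal for j
    unfolding Let_def
  proof (intro conjI allI impI)
    fix i assume j: "1 \<le> j"
    show "(deriv ^^ i) (f j) 0 / fact i =
      (-1) ^ (i + 1) * real (i + 1) * real (i + 2) * fact (j + i) *
                    (\<Sum>q = 0..i + 1. (-1) ^ q / real (q + 1) *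
                       real (Stirling (i + q + 1) q) / (fact (i + 1 - q) * fact (i + q + 1)))"
      using coeff_eq[OF j, of i] by (simp only: f_def funpow_add o_apply)
  next
    fix v :: real assume j: "1 \<le> j" and v: "\<bar>v\<bar> < 2 * pi"
    show "(\<lambda>i. (-1) ^ (i + 1) * real (i + 1) * real (i + 2) * fact (j + i) *
                    (\<Sum>q = 0..i + 1. (-1) ^ q / real (q + 1) *
                       real (Stirling (i + q + 1) q) / (fact (i + 1 - q) * fact (i + q + 1))) * v ^ i) sums f j v"
      using f_series[OF j v] by (simp only: coeff_eq[OF j])
  qed
  done

end
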